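(* Let $C$ be an open cone in $V$ and let $T$ be an open cone in $V$. Then $T\in\mathscr T(C)$ if and only if the dual cone $T^*$ is an extreme set of $C^*$.
   Context: $V$ is a finite-dimensional real vector space with dual $V^*$. An open cone is a nonempty open convex set $T\subset V$ with $\lambda T\subseteq T$ for all $\lambda>0$ and $0\notin T$; $\partial T$ is its boundary in $V$. Open tangent cone at $x\in\partial T$: $\tau(T,x):=\{\lambda(y-x):\lambda>0,\ y\in T\}$. For a set of cones $\mathbb T$, $\Gamma(\mathbb T):=\{\tau(T,x):T\in\mathbb T,\ x\in\partial T\}$ and $\mathscr T(C):=\bigcup_{k\ge1}\Gamma^k(\{C\})$. Dual cone: $T^*:=\{z\in V^*:\langle z,x\rangle\ge0\ \forall x\in T\}$. A convex subset $E$ of a convex set $K$ is an extreme set if whenever a relative interior point of a line segment in $K$ lies in $E$, both endpoints of the segment lie in $E$. *)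

theory Defs
  imports "HOL-Analysis.Analysis"
begin

text \<open>The finite-dimensional real vector space V is modelled by a type of class
  euclidean_space; the dual space is identified with V via the inner product.\<close>

definition open_cone :: "'a::euclidean_space set \<Rightarrow> bool" where
  "open_cone T \<longleftrightarrow> T \<noteq> {} \<and> open T \<and> convex T \<and>
     (\<forall>c>0. \<forall>x\<in>T. c *\<^sub>R x \<in> T) \<and> 0 \<notin> T"

definition tangent_cone :: "'a::euclidean_space set \<Rightarrow> 'a \<Rightarrow> 'a set" where
  "tangent_cone T x = {c *\<^sub>R (y - x) | c y. c > 0 \<and> y \<in> T}"

definition Gamma :: "'a::euclidean_space set set \<Rightarrow> 'a set set" where
  "Gamma TT = {tangent_cone T x | T x. T \<in> TT \<and> x \<in> frontier T}"

definition tangent_cones_iter :: "'a::euclidean_space set \<Rightarrow> 'a set set" where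
  "tangent_cones_iter C = (\<Union>k\<in>{1..}. (Gamma ^^ k) {C})"

definition dual_cone :: "'a::euclidean_space set \<Rightarrow> 'a set" where
  "dual_cone T = {z. \<forall>x\<in>T. 0 \<le> inner z x}"

end

theory Submission imports Defs begin


lemma cone_scale_lemma:
  fixes C :: "'a::euclidean_space set"
  assumes "open_cone C" and "\<And>y. y \<in> C \<Longrightarrow> b \<le> w \<bullet> y"
  shows "w \<in> dual_cone C \<and> b \<le> 0"
proof -
  have sc: "\<And>t y. t > 0 \<Longrightarrow> y \<in> C \<Longrightarrow> b \<le> t * (w \<bullet> y)"
    using assms unfolding open_cone_def by (metis inner_scaleR_right)
  have pos: "0 \<le> w \<bullet> y" if "y \<in> C" for y
  proof (rule ccontr)
    assume n: "\<not> 0 \<le> w \<bullet> y"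
    define t where "t = (\<bar>b\<bar> + 1) / (- (w \<bullet> y))"
    have "t > 0" using n unfolding t_def by (intro divide_pos_pos) auto
    have "t * (w \<bullet> y) = - (\<bar>b\<bar> + 1)" using n by (simp add: t_def field_simps)
    with sc[OF \<open>t>0\<close> that] show False by linarith
  qed
  obtain y where y: "y \<in> C" using assms unfolding open_cone_def by blast
  have "b \<le> 0"
  proof (rule ccontr)
    assume bp: "\<not> b \<le> 0"
    show False
    proof (cases "w \<bullet> y = 0")
      case True then show False using sc[of 1 y] y bp by simp
    next
      case False
      then have wp: "w \<bullet> y > 0" using pos[OF y] by simp
      define t where "t = b / (2 * (w \<bullet> y))"
      have "t > 0" using wp bp by (simp add: t_def)
      have "t * (w \<bullet> y) = b / 2" using wp by (simp add: t_def field_simps)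
      with sc[OF \<open>t>0\<close> y] bp show False by linarith
    qed
  qed
  then show ?thesis using pos unfolding dual_cone_def by auto
qed

lemma dual_pos:
  fixes C :: "'a::euclidean_space set"
  assumes "open_cone C" "z \<in> dual_cone C" "z \<noteq> 0" "x \<in> C"
  shows "0 < z \<bullet> x"
proof (rule ccontr)
  assume n: "\<not> 0 < z \<bullet> x"
  obtain e where e: "e > 0" "ball x e \<subseteq> C"
    using assms unfolding open_cone_def by (meson open_contains_ball)
  define y where "y = x - (e / (2 * norm z)) *\<^sub>R z"
  have nz: "norm z > 0" using assms by simp
  have "dist x y < e" using nz e by (simp add: y_def dist_norm)
  then have "y \<in> C" using e by auto
  then have "0 \<le> z \<bullet> y" using assms unfolding dual_cone_def by auto
  moreover have "z \<bullet> y = z \<bullet> x - (e / (2 * norm z)) * (z \<bullet> z)"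
    by (simp add: y_def inner_diff_right)
  moreover have "(e / (2 * norm z)) * (z \<bullet> z) > 0" using nz e by simp
  ultimately show False using n by linarith
qed

lemma dual_nonzero:
  fixes T :: "'a::euclidean_space set"
  assumes "open_cone T"
  shows "dual_cone T \<noteq> {0}"
proof -
  obtain a where "a \<noteq> 0" "\<forall>x\<in>T. 0 \<le> inner a x"
    using separating_hyperplane_set_0[of T] assms unfolding open_cone_def by auto
  then show ?thesis unfolding dual_cone_def by auto
qed

lemma convex_dual: "convex (dual_cone T)"
  unfolding dual_cone_def convex_def
  by (auto simp: inner_add_left intro!: add_nonneg_nonneg mult_nonneg_nonneg)

lemma dual_closure:
  assumes "z \<in> dual_cone T" "x \<in> closure T"
  shows "0 \<le> z \<bullet> x"
proof -
  have "T \<subseteq> {w. 0 \<le> z \<bullet> w}" using assms unfolding dual_cone_def by auto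
  then have "closure T \<subseteq> {w. 0 \<le> z \<bullet> w}"
    by (intro closure_minimal) (auto intro!: closed_Collect_le continuous_intros)
  then show ?thesis using assms by auto
qed

lemma dual_eq_imp_eq:
  fixes C T :: "'a::euclidean_space set"
  assumes C: "open_cone C" and T: "open_cone T" and eq: "dual_cone T = dual_cone C"
  shows "T = C"
proof -
  have *: "A \<subseteq> B" if A: "open_cone A" and B: "open_cone B" and e: "dual_cone A = dual_cone B"
    for A B :: "'a set"
  proof
    fix x assume xA: "x \<in> A"
    show "x \<in> B"
    proof (rule ccontr)
      assume xB: "x \<notin> B"
      obtain a b where ab: "a \<noteq> 0" "\<forall>y\<in>{x}. inner a y \<le> b" "\<forall>y\<in>B. inner a y \<ge> b"
        using separating_hyperplane_sets[of "{x}" B] B xB unfolding open_cone_def by auto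
      from cone_scale_lemma[OF B, of b a] ab have "a \<in> dual_cone B" "b \<le> 0" by auto
      then have "0 < a \<bullet> x" using dual_pos[OF A, of a x] e ab xA by auto
      then show False using ab \<open>b \<le> 0\<close> by auto
    qed
  qed
  show ?thesis using *[OF T C eq] *[OF C T eq[symmetric]] by auto
qed




lemma frontier_open_notin:
  assumes "open C" "x \<in> frontier C" shows "x \<notin> C"
  using assms by (simp add: frontier_def interior_open)

lemma tangent_open_cone:
  fixes C :: "'a::euclidean_space set"
  assumes C: "open_cone C" and x: "x \<in> frontier C"
  shows "open_cone (tangent_cone C x)"
proof -
  have oC: "open C" and cC: "convex C" and sC: "\<And>c y. c > 0 \<Longrightarrow> y \<in> C \<Longrightarrow> c *\<^sub>R y \<in> C"
    and neC: "C \<noteq> {}" using C unfolding open_cone_def by auto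
  have xn: "x \<notin> C" using frontier_open_notin[OF oC x] .
  obtain y0 where y0: "y0 \<in> C" using neC by auto
  have "1 *\<^sub>R (y0 - x) \<in> tangent_cone C x" unfolding tangent_cone_def mem_Collect_eq using y0 zero_less_one by blast
  then have ne: "tangent_cone C x \<noteq> {}" by blast
  have eq: "tangent_cone C x = (\<Union>c\<in>{0<..}. (\<lambda>v. c *\<^sub>R v) ` ((+) (- x) ` C))"
    unfolding tangent_cone_def by auto
  have op: "open (tangent_cone C x)"
    unfolding eq by (intro open_UN ballI open_scaling open_translation oC) auto
  have cv: "convex (tangent_cone C x)"
    unfolding convex_def
  proof (intro allI impI ballI)
    fix u v and p q :: real
    assume "u \<in> tangent_cone C x" "v \<in> tangent_cone C x" and pq: "0 \<le> p" "0 \<le> q" "p + q = 1"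
    then obtain c1 y1 c2 y2 where 1: "c1 > 0" "y1 \<in> C" "u = c1 *\<^sub>R (y1 - x)"
      and 2: "c2 > 0" "y2 \<in> C" "v = c2 *\<^sub>R (y2 - x)"
      unfolding tangent_cone_def by auto
    define s where "s = p * c1 + q * c2"
    have sp: "s > 0"
    proof -
      have "p > 0 \<or> q > 0" using pq by auto
      then show ?thesis using pq 1 2 unfolding s_def
        by (auto intro: add_pos_nonneg add_nonneg_pos)
    qed
    define y where "y = (p * c1 / s) *\<^sub>R y1 + (q * c2 / s) *\<^sub>R y2"
    have s1: "p * c1 / s + q * c2 / s = 1"
      using sp by (simp add: add_divide_distrib[symmetric] s_def)
    have "y \<in> C"
      unfolding y_def using 1 2 pq sp s1
      by (intro convexD[OF cC]) auto
    moreover have "p *\<^sub>R u + q *\<^sub>R v = s *\<^sub>R (y - x)"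
    proof -
      have sy: "s *\<^sub>R y = (p * c1) *\<^sub>R y1 + (q * c2) *\<^sub>R y2"
        using sp by (simp add: y_def scaleR_add_right)
      have "s *\<^sub>R (y - x) = (p * c1) *\<^sub>R y1 + (q * c2) *\<^sub>R y2 - (p * c1 + q * c2) *\<^sub>R x"
        by (simp only: scaleR_diff_right sy) (simp add: s_def)
      also have "\<dots> = p *\<^sub>R u + q *\<^sub>R v"
        unfolding 1 2 by (simp add: algebra_simps)
      finally show ?thesis by simp
    qed
    ultimately show "p *\<^sub>R u + q *\<^sub>R v \<in> tangent_cone C x"
      using sp unfolding tangent_cone_def by blast
  qed
  have sc: "\<forall>c>0. \<forall>v\<in>tangent_cone C x. c *\<^sub>R v \<in> tangent_cone C x"
  proof (intro allI impI ballI)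
    fix c v assume c: "(c::real) > 0" and "v \<in> tangent_cone C x"
    then obtain d y where "d > 0" "y \<in> C" "v = d *\<^sub>R (y - x)" unfolding tangent_cone_def by auto
    then have "c *\<^sub>R v = (c * d) *\<^sub>R (y - x)" "c * d > 0" using c by auto
    then show "c *\<^sub>R v \<in> tangent_cone C x" unfolding tangent_cone_def using \<open>y \<in> C\<close> by blast
  qed
  have z: "0 \<notin> tangent_cone C x"
    using xn unfolding tangent_cone_def by auto
  show ?thesis using ne op cv sc z unfolding open_cone_def by blast
qed

lemma dual_tangent:
  fixes C :: "'a::euclidean_space set"
  assumes C: "open_cone C" and x: "x \<in> closure C"
  shows "dual_cone (tangent_cone C x) = dual_cone C \<inter> {z. z \<bullet> x = 0}"
proof
  show "dual_cone C \<inter> {z. z \<bullet> x = 0} \<subseteq> dual_cone (tangent_cone C x)"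
    unfolding dual_cone_def tangent_cone_def by (auto simp: inner_diff_right)
next
  show "dual_cone (tangent_cone C x) \<subseteq> dual_cone C \<inter> {z. z \<bullet> x = 0}"
  proof
    fix z assume z: "z \<in> dual_cone (tangent_cone C x)"
    have "z \<bullet> x \<le> z \<bullet> y" if "y \<in> C" for y
    proof -
      have "y - x \<in> tangent_cone C x" using that unfolding tangent_cone_def by (auto intro!: exI[of _ 1])
      then show ?thesis using z unfolding dual_cone_def by (auto simp: inner_diff_right)
    qed
    from cone_scale_lemma[OF C, of "z \<bullet> x" z, OF this]
    have "z \<in> dual_cone C" "z \<bullet> x \<le> 0" by auto
    moreover have "0 \<le> z \<bullet> x" using dual_closure[OF \<open>z \<in> dual_cone C\<close> x] .
    ultimately show "z \<in> dual_cone C \<inter> {z. z \<bullet> x = 0}" by auto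
  qed
qed

lemma Gamma_mono: "A \<subseteq> B \<Longrightarrow> Gamma A \<subseteq> Gamma B"
  unfolding Gamma_def by blast

lemma Gamma_pow_mono: "A \<subseteq> B \<Longrightarrow> (Gamma ^^ k) A \<subseteq> (Gamma ^^ k) B"
  by (induction k) (simp_all add: Gamma_mono)

lemma iter_trans:
  assumes "C' \<in> Gamma {C}" "T \<in> tangent_cones_iter C'"
  shows "T \<in> tangent_cones_iter C"
proof -
  obtain k where k: "k \<ge> 1" "T \<in> (Gamma ^^ k) {C'}"
    using assms unfolding tangent_cones_iter_def by auto
  have "(Gamma ^^ k) {C'} \<subseteq> (Gamma ^^ k) (Gamma {C})"
    using assms by (intro Gamma_pow_mono) auto
  also have "\<dots> = (Gamma ^^ Suc k) {C}" by (simp add: funpow_Suc_right del: funpow.simps)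
  finally show ?thesis using k unfolding tangent_cones_iter_def by (auto intro!: bexI[of _ "Suc k"])
qed

lemma self_in_Gamma:
  fixes C :: "'a::euclidean_space set"
  assumes C: "open_cone C" shows "C \<in> Gamma {C}"
proof -
  have oC: "open C" and sC: "\<And>c y. c > 0 \<Longrightarrow> y \<in> C \<Longrightarrow> c *\<^sub>R y \<in> C"
    and neC: "C \<noteq> {}" and z: "0 \<notin> C" using C unfolding open_cone_def by auto
  obtain y where y: "y \<in> C" using neC by auto
  have "0 \<in> closure C"
  proof -
    have "(\<lambda>n. (1 / real (Suc n)) *\<^sub>R y) \<longlonglongrightarrow> 0 *\<^sub>R y"
      by (intro tendsto_intros LIMSEQ_Suc[OF lim_const_over_n] )
    moreover have "\<forall>n. (1 / real (Suc n)) *\<^sub>R y \<in> C" using sC y by simp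
    ultimately show ?thesis unfolding closure_sequential
      by (intro exI[of _ "\<lambda>n. (1 / real (Suc n)) *\<^sub>R y"]) simp
  qed
  then have f: "0 \<in> frontier C" using z oC by (simp add: frontier_def interior_open)
  have "tangent_cone C 0 = C"
    unfolding tangent_cone_def using sC by (auto intro!: exI[of _ 1])
  then show ?thesis using f unfolding Gamma_def by (smt (verit) mem_Collect_eq singletonI)
qed




lemma forward:
  fixes C :: "'a::euclidean_space set"
  assumes C: "open_cone C"
  shows "\<forall>T\<in>(Gamma ^^ k) {C}. open_cone T \<and> dual_cone T face_of dual_cone C"
proof (induction k)
  case 0
  then show ?case using C by (simp add: face_of_refl convex_dual)
next
  case (Suc k)
  show ?case
  proof
    fix T assume "T \<in> (Gamma ^^ Suc k) {C}"
    then obtain S x where S: "S \<in> (Gamma ^^ k) {C}" and x: "x \<in> frontier S" and T: "T = tangent_cone S x"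
      by (auto simp: Gamma_def)
    have oS: "open_cone S" and fS: "dual_cone S face_of dual_cone C" using Suc S by auto
    have xc: "x \<in> closure S" using x by (simp add: frontier_def)
    have "dual_cone T = dual_cone S \<inter> {z. (- x) \<bullet> z = 0}"
      using dual_tangent[OF oS xc] T by (auto simp: inner_commute)
    moreover have "(dual_cone S \<inter> {z. (- x) \<bullet> z = 0}) face_of dual_cone S"
      by (rule face_of_Int_supporting_hyperplane_le[OF convex_dual])
         (use dual_closure[OF _ xc] in \<open>auto simp: inner_commute\<close>)
    ultimately have "dual_cone T face_of dual_cone C" using fS face_of_trans by metis
    then show "open_cone T \<and> dual_cone T face_of dual_cone C"
      using tangent_open_cone[OF oS x] T by simp
  qed
qed

lemma bidual:
  fixes C :: "'a::euclidean_space set"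
  assumes C: "open_cone C" and a: "\<And>z. z \<in> dual_cone C \<Longrightarrow> 0 \<le> a \<bullet> z"
  shows "a \<in> closure C"
proof (rule ccontr)
  assume n: "a \<notin> closure C"
  have "convex (closure C)" using C by (simp add: open_cone_def convex_closure)
  then obtain w b where wb: "inner w a < b" "\<forall>x\<in>closure C. inner w x > b"
    using separating_hyperplane_closed_point[of "closure C" a] n by auto
  have "\<And>y. y \<in> C \<Longrightarrow> b \<le> w \<bullet> y" using wb closure_subset by fastforce
  from cone_scale_lemma[OF C this] have "w \<in> dual_cone C" "b \<le> 0" by auto
  then show False using a[of w] wb by (simp add: inner_commute)
qed

lemma backward:
  shows "\<forall>(C::'a::euclidean_space set) (T::'a set). open_cone C \<longrightarrow> nat (aff_dim (dual_cone C)) = n \<longrightarrow> open_cone T \<longrightarrow>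
     dual_cone T face_of dual_cone C \<longrightarrow> T \<in> tangent_cones_iter C"
proof (induction n rule: less_induct)
  case (less n)
  show ?case
  proof (intro allI impI)
    fix C T :: "'a set"
    assume C: "open_cone C" and n: "nat (aff_dim (dual_cone C)) = n" and T: "open_cone T"
      and F: "dual_cone T face_of dual_cone C"
    let ?K = "dual_cone C" and ?F = "dual_cone T"
    show "T \<in> tangent_cones_iter C"
    proof (cases "?F = ?K")
      case True
      then have "T = C" using dual_eq_imp_eq[OF C T] by simp
      then show ?thesis using self_in_Gamma[OF C]
        unfolding tangent_cones_iter_def by (auto intro!: bexI[of _ 1])
    next
      case False
      have cK: "convex ?K" by (rule convex_dual)
      have cF: "convex ?F" by (rule convex_dual)
      have F0: "0 \<in> ?F" unfolding dual_cone_def by simp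
      obtain z0 where z0: "z0 \<in> rel_interior ?F"
        using rel_interior_eq_empty[OF cF] F0 by auto
      have z0F: "z0 \<in> ?F" using z0 rel_interior_subset by auto
      have FK: "?F \<subseteq> ?K" using F face_of_imp_subset by auto
      have "z0 \<notin> rel_interior ?K"
        using face_of_disjoint_rel_interior[OF F False] z0F by auto
      then obtain a where a: "a \<noteq> 0" "\<And>y. y \<in> ?K \<Longrightarrow> a \<bullet> z0 \<le> a \<bullet> y"
        "\<And>y. y \<in> rel_interior ?K \<Longrightarrow> a \<bullet> z0 < a \<bullet> y"
        using supporting_hyperplane_rel_boundary[OF cK] z0F FK by blast
      let ?E = "?K \<inter> {y. a \<bullet> y = a \<bullet> z0}"
      have EK: "?E face_of ?K"
        using face_of_Int_supporting_hyperplane_ge[OF cK] a(2) by auto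
      have FE: "?F \<subseteq> ?E"
      proof (rule subset_of_face_of[OF EK FK])
        show "?E \<inter> rel_interior ?F \<noteq> {}" using z0 z0F FK by auto
      qed
      have az0: "a \<bullet> z0 = 0" using FE F0 by auto
      have aK: "0 \<le> a \<bullet> y" if "y \<in> ?K" for y using a(2)[OF that] az0 by simp
      have acl: "a \<in> closure C" using bidual[OF C] aK by auto
      have anC: "a \<notin> C"
      proof
        assume aC: "a \<in> C"
        have "?E \<subseteq> {0}"
        proof
          fix y assume y: "y \<in> ?E"
          show "y \<in> {0}"
          proof (rule ccontr)
            assume "y \<notin> {0}"
            then have "0 < y \<bullet> a" using dual_pos[OF C _ _ aC] y by auto
            then show False using y az0 by (simp add: inner_commute)
          qed
        qed
        then have "?F \<subseteq> {0}" using FE by auto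
        then show False using dual_nonzero[OF T] F0 by auto
      qed
      have afr: "a \<in> frontier C" using acl anC C
        by (simp add: frontier_def interior_open open_cone_def)
      define C' where "C' = tangent_cone C a"
      have C': "open_cone C'" unfolding C'_def by (rule tangent_open_cone[OF C afr])
      have dC': "dual_cone C' = ?E"
        unfolding C'_def dual_tangent[OF C acl] using az0 by (auto simp: inner_commute)
      have FE': "?F face_of dual_cone C'" unfolding dC'
        using face_of_subset[OF F FE] by auto
      have "rel_interior ?K \<noteq> {}" using rel_interior_eq_empty[OF cK] F0 FK by auto
      then obtain y where y: "y \<in> rel_interior ?K" by auto
      have "y \<notin> ?E" using a(3)[OF y] by auto
      then have "?E \<noteq> ?K" using y rel_interior_subset by auto
      then have lt: "aff_dim ?E < aff_dim ?K" using face_of_aff_dim_lt[OF cK EK] by auto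
      have "?E \<noteq> {}" using FE F0 by auto
      then have "aff_dim ?E \<ge> 0" using aff_dim_negative_iff by (metis not_le)
      then have ltn: "nat (aff_dim (dual_cone C')) < n" using lt n dC' by auto
      have "T \<in> tangent_cones_iter C'" by (rule less.IH[OF ltn, rule_format, OF C' refl T FE'])
      moreover have "C' \<in> Gamma {C}" unfolding Gamma_def C'_def using afr by blast
      ultimately show ?thesis using iter_trans by blast
    qed
  qed
qed

theorem mainTheorem13:
  fixes C T :: "'a::euclidean_space set"
  assumes "open_cone C" and "open_cone T"
  shows "T \<in> tangent_cones_iter C \<longleftrightarrow> dual_cone T face_of dual_cone C"
proof
  assume "T \<in> tangent_cones_iter C"
  then obtain k where "T \<in> (Gamma ^^ k) {C}" unfolding tangent_cones_iter_def by auto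
  then show "dual_cone T face_of dual_cone C" using forward[OF assms(1)] by blast
next
  assume "dual_cone T face_of dual_cone C"
  then show "T \<in> tangent_cones_iter C" using backward assms by blast
qed


end
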